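(* Let $\bm{r}_i=(r_{1i},\ldots,r_{ni})^{T}\in\mathbb{R}^{n}$ and $w_i\in\mathbb{R}$ for $i=1,\ldots,m$. For each $j=1,\ldots,n$ let $$p_j=\max(r_{j1}+w_1,\ldots,r_{jm}+w_m),\qquad q_j=\min(r_{j1}-w_1,\ldots,r_{jm}-w_m).$$ Then $$\min_{\bm{x}\in\mathbb{R}^{n}}\max_{1\le i\le m}\big(\rho(\bm{r}_i,\bm{x})+w_i\big)=\Delta:=\tfrac12\max(p_1-q_1,\ldots,p_n-q_n),$$ where $\rho(\bm{x},\bm{y})=\max_{1\le j\le n}|x_j-y_j|$ is the Chebyshev distance, and the minimum is attained at every vector $\bm{x}=(x_j)$ with $p_j-\Delta\le x_j\le q_j+\Delta$ for all $j=1,\ldots,n$. *)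

theory Defs
  imports "HOL-Analysis.Analysis"
begin

text \<open>Chebyshev distance on R^n (n = CARD('n), n \<ge> 1 automatically).\<close>
definition cheb_dist :: "real^'n::finite \<Rightarrow> real^'n \<Rightarrow> real" where
  "cheb_dist x y = Max (range (\<lambda>j. \<bar>x $ j - y $ j\<bar>))"

end

theory Submission
  imports Defs
begin

lemma cheb_ge: "\<bar>x $ j - y $ j\<bar> \<le> cheb_dist x y"
  unfolding cheb_dist_def by (rule Max_ge) auto

lemma cheb_le: "(\<And>j. \<bar>x $ j - y $ j\<bar> \<le> c) \<Longrightarrow> cheb_dist x y \<le> c"
  unfolding cheb_dist_def by (subst Max_le_iff) auto

theorem corollary2:
  fixes r :: "'m::finite \<Rightarrow> real^'n::finite"
    and w :: "'m \<Rightarrow> real"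
    and p q :: "'n \<Rightarrow> real"
    and \<Delta> :: real
  assumes p_def: "\<And>j. p j = Max (range (\<lambda>i. r i $ j + w i))"
    and q_def: "\<And>j. q j = Min (range (\<lambda>i. r i $ j - w i))"
    and Delta_def: "\<Delta> = Max (range (\<lambda>j. p j - q j)) / 2"
  shows "(\<forall>x. \<Delta> \<le> Max (range (\<lambda>i. cheb_dist (r i) x + w i)))
       \<and> (\<exists>x. Max (range (\<lambda>i. cheb_dist (r i) x + w i)) = \<Delta>)
       \<and> (\<forall>x. (\<forall>j. p j - \<Delta> \<le> x $ j \<and> x $ j \<le> q j + \<Delta>)
              \<longrightarrow> Max (range (\<lambda>i. cheb_dist (r i) x + w i)) = \<Delta>)"
proof -
  have pge: "r i $ j + w i \<le> p j" for i j unfolding p_def by (rule Max_ge) auto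
  have qle: "q j \<le> r i $ j - w i" for i j unfolding q_def by (rule Min_le) auto
  have pqD: "p j - q j \<le> 2 * \<Delta>" for j
    unfolding Delta_def using Max_ge[of "range (\<lambda>j. p j - q j)" "p j - q j"] by auto
  obtain j0 where j0: "2 * \<Delta> = p j0 - q j0"
  proof -
    have "Max (range (\<lambda>j. p j - q j)) \<in> range (\<lambda>j. p j - q j)" by (rule Max_in) auto
    then obtain j0 where "Max (range (\<lambda>j. p j - q j)) = p j0 - q j0" by blast
    then have "2 * \<Delta> = p j0 - q j0" unfolding Delta_def by simp
    then show ?thesis by (rule that)
  qed
  obtain i1 where i1: "p j0 = r i1 $ j0 + w i1"
  proof -
    have "Max (range (\<lambda>i. r i $ j0 + w i)) \<in> range (\<lambda>i. r i $ j0 + w i)" by (rule Max_in) auto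
    then obtain i where "Max (range (\<lambda>i. r i $ j0 + w i)) = r i $ j0 + w i" by blast
    then have "p j0 = r i $ j0 + w i" using p_def[of j0] by simp
    then show ?thesis by (rule that)
  qed
  obtain i2 where i2: "q j0 = r i2 $ j0 - w i2"
  proof -
    have "Min (range (\<lambda>i. r i $ j0 - w i)) \<in> range (\<lambda>i. r i $ j0 - w i)" by (rule Min_in) auto
    then obtain i where "Min (range (\<lambda>i. r i $ j0 - w i)) = r i $ j0 - w i" by blast
    then have "q j0 = r i $ j0 - w i" using q_def[of j0] by simp
    then show ?thesis by (rule that)
  qed
  have lower: "\<Delta> \<le> Max (range (\<lambda>i. cheb_dist (r i) x + w i))" for x
  proof -
    let ?M = "Max (range (\<lambda>i. cheb_dist (r i) x + w i))"
    have a: "cheb_dist (r i) x + w i \<le> ?M" for i by (rule Max_ge) auto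
    have b1: "\<bar>r i1 $ j0 - x $ j0\<bar> \<le> cheb_dist (r i1) x" by (rule cheb_ge)
    have b2: "\<bar>r i2 $ j0 - x $ j0\<bar> \<le> cheb_dist (r i2) x" by (rule cheb_ge)
    show ?thesis using a[of i1] a[of i2] b1 b2 i1 i2 j0 by linarith
  qed
  have upper: "Max (range (\<lambda>i. cheb_dist (r i) x + w i)) = \<Delta>"
    if h: "\<forall>j. p j - \<Delta> \<le> x $ j \<and> x $ j \<le> q j + \<Delta>" for x
  proof -
    have "cheb_dist (r i) x + w i \<le> \<Delta>" for i
    proof -
      have "\<bar>r i $ j - x $ j\<bar> \<le> \<Delta> - w i" for j
        using h[rule_format, of j] pge[of i j] qle[of j i] by (auto simp: abs_le_iff)
      then have "cheb_dist (r i) x \<le> \<Delta> - w i" by (rule cheb_le)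
      then show ?thesis by simp
    qed
    then have "Max (range (\<lambda>i. cheb_dist (r i) x + w i)) \<le> \<Delta>"
      by (subst Max_le_iff) auto
    with lower[of x] show ?thesis by simp
  qed
  define x0 :: "real^'n" where "x0 = (\<chi> j. (p j + q j) / 2)"
  have "\<forall>j. p j - \<Delta> \<le> x0 $ j \<and> x0 $ j \<le> q j + \<Delta>"
    using pqD by (auto simp: x0_def field_simps)
  then have "\<exists>x. Max (range (\<lambda>i. cheb_dist (r i) x + w i)) = \<Delta>" using upper by blast
  with lower upper show ?thesis by blast
qed

end
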